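(* Under the hypotheses and notation of the preceding statement (Theorem 1), with $\tilde L_n,\tilde U_n$ defined by the recursion there, the following hold almost surely for every $n\ge1$: $$0\le\tilde L_{n-1}\le\tilde L_n\le\tilde U_n\le\tilde U_{n-1}\le1,\qquad \tilde U_n-\tilde L_n=(\tilde U_{n-1}-\tilde L_{n-1})\,\frac{U_n-L_n}{U_n^*-L_n^*},$$ and moreover $\mathbb{E}\tilde L_n=\mathbb{E}L_n=l_n$ and $\mathbb{E}\tilde U_n=\mathbb{E}U_n=u_n$ for every $n\ge1$.
   Context: Setting: $s\in[0,1]$; random variables $L_n,U_n$ ($n\ge1$), $L_0\equiv0$, $U_0\equiv1$; $\mathcal{F}_0$ trivial, $\mathcal{F}_n=\sigma\{L_n,U_n\}$, $\mathcal{F}_{k,\infty}=\sigma\{\mathcal{F}_k,\mathcal{F}_{k+1},\dots\}$; a.s. $L_n\le U_n$, $L_n,U_n\in[0,1]$; $\mathbb{E}L_n=l_n\nearrow s$, $\mathbb{E}U_n=u_n\searrow s$; $\mathbb{E}(L_{n-1}\mid\mathcal{F}_{n,\infty})=\mathbb{E}(L_{n-1}\mid\mathcal{F}_n)\le L_n$ and $\mathbb{E}(U_{n-1}\mid\mathcal{F}_{n,\infty})=\mathbb{E}(U_{n-1}\mid\mathcal{F}_n)\ge U_n$ a.s.; $L_n^*=\mathbb{E}(L_{n-1}\mid\mathcal{F}_n)$, $U_n^*=\mathbb{E}(U_{n-1}\mid\mathcal{F}_n)$ with $U_n^*>L_n^*$ a.s.; $\tilde L_0=0$, $\tilde U_0=1$,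 $\tilde L_n=\tilde L_{n-1}+\frac{L_n-L_n^*}{U_n^*-L_n^*}(\tilde U_{n-1}-\tilde L_{n-1})$, $\tilde U_n=\tilde U_{n-1}-\frac{U_n^*-U_n}{U_n^*-L_n^*}(\tilde U_{n-1}-\tilde L_{n-1})$. *)

theory Defs
  imports "HOL-Probability.Probability"
begin

definition Fn :: "'a measure \<Rightarrow> (nat \<Rightarrow> 'a \<Rightarrow> real) \<Rightarrow> (nat \<Rightarrow> 'a \<Rightarrow> real) \<Rightarrow> nat \<Rightarrow> 'a measure" where
  "Fn M L U n = vimage_algebra (space M) (\<lambda>x. (L n x, U n x)) borel"

definition Finf :: "'a measure \<Rightarrow> (nat \<Rightarrow> 'a \<Rightarrow> real) \<Rightarrow> (nat \<Rightarrow> 'a \<Rightarrow> real) \<Rightarrow> nat \<Rightarrow> 'a measure" where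
  "Finf M L U k = sigma (space M) (\<Union>j\<in>{k..}. sets (Fn M L U j))"

definition Lstar :: "'a measure \<Rightarrow> (nat \<Rightarrow> 'a \<Rightarrow> real) \<Rightarrow> (nat \<Rightarrow> 'a \<Rightarrow> real) \<Rightarrow> nat \<Rightarrow> 'a \<Rightarrow> real" where
  "Lstar M L U n = real_cond_exp M (Fn M L U n) (L (n - 1))"

definition Ustar :: "'a measure \<Rightarrow> (nat \<Rightarrow> 'a \<Rightarrow> real) \<Rightarrow> (nat \<Rightarrow> 'a \<Rightarrow> real) \<Rightarrow> nat \<Rightarrow> 'a \<Rightarrow> real" where
  "Ustar M L U n = real_cond_exp M (Fn M L U n) (U (n - 1))"

fun tildeLU :: "'a measure \<Rightarrow> (nat \<Rightarrow> 'a \<Rightarrow> real) \<Rightarrow> (nat \<Rightarrow> 'a \<Rightarrow> real) \<Rightarrow> nat \<Rightarrow> 'a \<Rightarrow> real \<times> real" where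
  "tildeLU M L U 0 x = (0, 1)"
| "tildeLU M L U (Suc n) x =
     (let a = fst (tildeLU M L U n x); b = snd (tildeLU M L U n x);
          Ls = Lstar M L U (Suc n) x; Us = Ustar M L U (Suc n) x
      in (a + (L (Suc n) x - Ls) / (Us - Ls) * (b - a),
          b - (Us - U (Suc n) x) / (Us - Ls) * (b - a)))"

definition tildeL :: "'a measure \<Rightarrow> (nat \<Rightarrow> 'a \<Rightarrow> real) \<Rightarrow> (nat \<Rightarrow> 'a \<Rightarrow> real) \<Rightarrow> nat \<Rightarrow> 'a \<Rightarrow> real" where
  "tildeL M L U n x = fst (tildeLU M L U n x)"

definition tildeU :: "'a measure \<Rightarrow> (nat \<Rightarrow> 'a \<Rightarrow> real) \<Rightarrow> (nat \<Rightarrow> 'a \<Rightarrow> real) \<Rightarrow> nat \<Rightarrow> 'a \<Rightarrow> real" where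
  "tildeU M L U n x = snd (tildeLU M L U n x)"

end

theory Submission
  imports Defs
begin


lemma Fn_space[simp]: "space (Fn M L U n) = space M"
  by (simp add: Fn_def)

lemma Fn_sets_Pow: "sets (Fn M L U n) \<subseteq> Pow (space M)"
  using sets.space_closed[of "Fn M L U n"] by simp

lemma Fn_Union_Pow: "(\<Union>j\<in>A. sets (Fn M L U j)) \<subseteq> Pow (space M)"
  using Fn_sets_Pow by blast

lemma Finf_space[simp]: "space (Finf M L U k) = space M"
  unfolding Finf_def by (rule space_measure_of[OF Fn_Union_Pow])

lemma Finf_sets: "sets (Finf M L U k) = sigma_sets (space M) (\<Union>j\<in>{k..}. sets (Fn M L U j))"
  unfolding Finf_def by (rule sets_measure_of[OF Fn_Union_Pow])

lemma Fn_sub_M: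
  assumes "L n \<in> borel_measurable M" "U n \<in> borel_measurable M"
  shows "subalgebra M (Fn M L U n)"
proof -
  have "(\<lambda>x. (L n x, U n x)) \<in> measurable M (borel \<Otimes>\<^sub>M borel)" using assms by measurable
  then have "(\<lambda>x. (L n x, U n x)) \<in> measurable M borel" by (simp add: borel_prod)
  then have "sets (vimage_algebra (space M) (\<lambda>x. (L n x, U n x)) borel) \<subseteq> sets M"
    by (rule sets_image_in_sets[OF refl])
  then show ?thesis unfolding subalgebra_def Fn_def by simp
qed

lemma Finf_sub_M:
  assumes "\<And>n. L n \<in> borel_measurable M" "\<And>n. U n \<in> borel_measurable M"
  shows "subalgebra M (Finf M L U k)"
proof -
  have "sets (Fn M L U j) \<subseteq> sets M" for j
    using Fn_sub_M[where L=L and n=j and U=U and M=M, OF assms(1)[of j] assms(2)[of j]] unfolding subalgebra_def by (rule conjunct2)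
  then have "(\<Union>j\<in>{k..}. sets (Fn M L U j)) \<subseteq> sets M" by (simp add: UN_subset_iff)
  then have "sigma_sets (space M) (\<Union>j\<in>{k..}. sets (Fn M L U j)) \<subseteq> sets M"
    by (rule sets.sigma_sets_subset)
  then show ?thesis unfolding subalgebra_def Finf_sets by simp
qed

lemma Fn_sub_Finf: "k \<le> n \<Longrightarrow> subalgebra (Finf M L U k) (Fn M L U n)"
  unfolding subalgebra_def Finf_sets by (simp; blast intro: sigma_sets.Basic)

lemma Finf_mono: "k \<le> n \<Longrightarrow> subalgebra (Finf M L U k) (Finf M L U n)"
  unfolding subalgebra_def Finf_sets
  apply (auto intro!: sigma_sets_mono)
  by (meson atLeast_iff order_trans UN_I sigma_sets.Basic)

lemma L_meas_Fn: "L n \<in> borel_measurable (Fn M L U n)"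
proof -
  have "(\<lambda>x. (L n x, U n x)) \<in> measurable (Fn M L U n) borel"
    unfolding Fn_def by (rule measurable_vimage_algebra1) auto
  then have "(\<lambda>x. (L n x, U n x)) \<in> measurable (Fn M L U n) (borel \<Otimes>\<^sub>M borel)" by (simp only: borel_prod)
  from measurable_compose[OF this measurable_fst] show ?thesis by simp
qed

lemma U_meas_Fn: "U n \<in> borel_measurable (Fn M L U n)"
proof -
  have "(\<lambda>x. (L n x, U n x)) \<in> measurable (Fn M L U n) borel"
    unfolding Fn_def by (rule measurable_vimage_algebra1) auto
  then have "(\<lambda>x. (L n x, U n x)) \<in> measurable (Fn M L U n) (borel \<Otimes>\<^sub>M borel)" by (simp only: borel_prod)
  from measurable_compose[OF this measurable_snd] show ?thesis by simp
qed

lemma sfs: "prob_space M \<Longrightarrow> subalgebra M F \<Longrightarrow> sigma_finite_subalgebra M F"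
  by (intro finite_measure_subalgebra_is_sigma_finite) (simp add: finite_measure_subalgebra_def finite_measure_subalgebra_axioms_def prob_space_def)




lemma tL0[simp]: "tildeL M L U 0 x = 0" by (simp add: tildeL_def)
lemma tU0[simp]: "tildeU M L U 0 x = 1" by (simp add: tildeU_def)
lemma tLSuc: "tildeL M L U (Suc n) x = tildeL M L U n x + (L (Suc n) x - Lstar M L U (Suc n) x)
   / (Ustar M L U (Suc n) x - Lstar M L U (Suc n) x) * (tildeU M L U n x - tildeL M L U n x)"
  by (simp add: tildeL_def tildeU_def Let_def)
lemma tUSuc: "tildeU M L U (Suc n) x = tildeU M L U n x - (Ustar M L U (Suc n) x - U (Suc n) x)
   / (Ustar M L U (Suc n) x - Lstar M L U (Suc n) x) * (tildeU M L U n x - tildeL M L U n x)"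
  by (simp add: tildeL_def tildeU_def Let_def)

lemma step_alg:
  fixes a b ls l u us :: real
  assumes "0 \<le> a" "a \<le> b" "b \<le> 1" "ls \<le> l" "l \<le> u" "u \<le> us" "ls < us"
  defines "a' \<equiv> a + (l - ls) / (us - ls) * (b - a)"
      and "b' \<equiv> b - (us - u) / (us - ls) * (b - a)"
  shows "a \<le> a'" "a' \<le> b'" "b' \<le> b" "b' - a' = (b - a) * ((u - l) / (us - ls))"
    "0 \<le> (l - ls) / (us - ls)" "(l - ls) / (us - ls) \<le> 1"
proof -
  have p: "us - ls > 0" using assms by simp
  have t1: "0 \<le> (l - ls) / (us - ls)" using assms p by simp
  have t1': "(l - ls) / (us - ls) \<le> 1" using assms p by (simp add: divide_le_eq_1)
  have t2: "0 \<le> (us - u) / (us - ls)" using assms p by simp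
  have e: "b' - a' = (b - a) * ((u - l) / (us - ls))"
  proof -
    have "b' - a' = (b-a)*(1 - ((l-ls)/(us-ls) + (us-u)/(us-ls)))"
      unfolding a'_def b'_def by (simp add: algebra_simps)
    moreover have "1 - ((l-ls)/(us-ls) + (us-u)/(us-ls)) = (u-l)/(us-ls)"
    proof -
      have nz: "us - ls \<noteq> 0" using p by simp
      have "(l-ls)/(us-ls) + (us-u)/(us-ls) = ((l-ls) + (us-u))/(us-ls)" by (simp add: add_divide_distrib)
      moreover have "1 = (us-ls)/(us-ls)" using nz by simp
      ultimately have "1 - ((l-ls)/(us-ls) + (us-u)/(us-ls)) = ((us-ls) - ((l-ls) + (us-u)))/(us-ls)"
        by (metis diff_divide_distrib)
      then show ?thesis by simp
    qed
    ultimately show ?thesis by simp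
  qed
  have "0 \<le> (u - l) / (us - ls)" using assms p by simp
  then show "a' \<le> b'" using e assms by (smt (verit) mult_nonneg_nonneg)
  show "a \<le> a'" unfolding a'_def using t1 assms by simp
  show "b' \<le> b" unfolding b'_def using t2 assms by simp
  show "b' - a' = (b - a) * ((u - l) / (us - ls))" by (rule e)
  show "0 \<le> (l - ls) / (us - ls)" "(l - ls) / (us - ls) \<le> 1" using t1 t1' by auto
qed

lemma tL_meas:
  assumes "\<And>n. L n \<in> borel_measurable M" "\<And>n. U n \<in> borel_measurable M"
  shows "tildeL M L U n \<in> borel_measurable M \<and> tildeU M L U n \<in> borel_measurable M"
proof (induction n)
  case 0 then show ?case by (simp add: tildeL_def tildeU_def)
next
  case (Suc n)
  have [measurable]: "tildeL M L U n \<in> borel_measurable M" "tildeU M L U n \<in> borel_measurable M"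
    "L (Suc n) \<in> borel_measurable M" "U (Suc n) \<in> borel_measurable M"
    "Lstar M L U (Suc n) \<in> borel_measurable M" "Ustar M L U (Suc n) \<in> borel_measurable M"
    using Suc assms by (auto simp: Lstar_def Ustar_def)
  have e1: "tildeL M L U (Suc n) = (\<lambda>x. tildeL M L U n x + (L (Suc n) x - Lstar M L U (Suc n) x)
   / (Ustar M L U (Suc n) x - Lstar M L U (Suc n) x) * (tildeU M L U n x - tildeL M L U n x))"
    by (rule ext, rule tLSuc)
  have e2: "tildeU M L U (Suc n) = (\<lambda>x. tildeU M L U n x - (Ustar M L U (Suc n) x - U (Suc n) x)
   / (Ustar M L U (Suc n) x - Lstar M L U (Suc n) x) * (tildeU M L U n x - tildeL M L U n x))"
    by (rule ext, rule tUSuc)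
  show ?case unfolding e1 e2 by measurable
qed




definition good where
  "good M L U x \<longleftrightarrow> (\<forall>n\<ge>1. Lstar M L U n x \<le> L n x \<and> L n x \<le> U n x \<and> U n x \<le> Ustar M L U n x
      \<and> Lstar M L U n x < Ustar M L U n x)"

lemma pw:
  assumes "good M L U x"
  shows "0 \<le> tildeL M L U n x \<and> tildeL M L U n x \<le> tildeU M L U n x \<and> tildeU M L U n x \<le> 1"
proof (induction n)
  case 0 then show ?case by simp
next
  case (Suc n)
  have g: "Lstar M L U (Suc n) x \<le> L (Suc n) x" "L (Suc n) x \<le> U (Suc n) x" "U (Suc n) x \<le> Ustar M L U (Suc n) x"
      "Lstar M L U (Suc n) x < Ustar M L U (Suc n) x" using assms unfolding good_def by auto
  note s = step_alg[OF conjunct1[OF Suc] conjunct1[OF conjunct2[OF Suc]] conjunct2[OF conjunct2[OF Suc]] g]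
  show ?case unfolding tLSuc tUSuc using s(1-3) Suc by linarith
qed

lemma pw2:
  assumes "good M L U x" "n \<ge> 1"
  shows "0 \<le> tildeL M L U (n - 1) x \<and>
            tildeL M L U (n - 1) x \<le> tildeL M L U n x \<and>
            tildeL M L U n x \<le> tildeU M L U n x \<and>
            tildeU M L U n x \<le> tildeU M L U (n - 1) x \<and>
            tildeU M L U (n - 1) x \<le> 1 \<and>
            tildeU M L U n x - tildeL M L U n x
              = (tildeU M L U (n - 1) x - tildeL M L U (n - 1) x)
                * ((U n x - L n x) / (Ustar M L U n x - Lstar M L U n x))"
proof -
  obtain m where n: "n = Suc m" using assms(2) by (cases n) auto
  have g: "Lstar M L U (Suc m) x \<le> L (Suc m) x" "L (Suc m) x \<le> U (Suc m) x" "U (Suc m) x \<le> Ustar M L U (Suc m) x"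
      "Lstar M L U (Suc m) x < Ustar M L U (Suc m) x" using assms unfolding good_def by auto
  note P = pw[OF assms(1), of m]
  note s = step_alg[OF conjunct1[OF P] conjunct1[OF conjunct2[OF P]] conjunct2[OF conjunct2[OF P]] g]
  show ?thesis unfolding n tLSuc tUSuc using s(1-4) P by simp
qed

lemma gD_bound:
  assumes "good M L U x"
  shows "\<bar>(L (Suc m) x - Lstar M L U (Suc m) x) / (Ustar M L U (Suc m) x - Lstar M L U (Suc m) x)
        * (tildeU M L U m x - tildeL M L U m x)\<bar> \<le> 1"
proof -
  have g: "Lstar M L U (Suc m) x \<le> L (Suc m) x" "L (Suc m) x \<le> U (Suc m) x" "U (Suc m) x \<le> Ustar M L U (Suc m) x"
      "Lstar M L U (Suc m) x < Ustar M L U (Suc m) x" using assms unfolding good_def by auto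
  note P = pw[OF assms(1), of m]
  note s = step_alg[OF conjunct1[OF P] conjunct1[OF conjunct2[OF P]] conjunct2[OF conjunct2[OF P]] g]
  have "0 \<le> tildeU M L U m x - tildeL M L U m x" "tildeU M L U m x - tildeL M L U m x \<le> 1" using P by auto
  moreover have "\<And>a b::real. 0 \<le> a \<Longrightarrow> a \<le> 1 \<Longrightarrow> 0 \<le> b \<Longrightarrow> b \<le> 1 \<Longrightarrow> \<bar>a * b\<bar> \<le> 1"
    by (simp add: abs_mult mult_le_one)
  ultimately show ?thesis using s(5,6) by blast
qed



lemma bnd_int:
  fixes f :: "'a \<Rightarrow> real"
  assumes "prob_space M" "f \<in> borel_measurable M" "AE x in M. \<bar>f x\<bar> \<le> 1"
  shows "integrable M f"
proof -
  interpret prob_space M by (rule assms(1))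
  have i1: "integrable M (\<lambda>_. 1::real)" by simp
  have "AE x in M. norm (f x) \<le> norm ((\<lambda>_. 1::real) x)" using assms(3) by simp
  then show ?thesis by (rule Bochner_Integration.integrable_bound[OF i1 assms(2)])
qed



theorem mainTheorem4:
  fixes M :: "'a measure" and L U :: "nat \<Rightarrow> 'a \<Rightarrow> real"
    and l u :: "nat \<Rightarrow> real" and s :: real
  assumes "prob_space M"
    and "0 \<le> s" "s \<le> 1"
    and "\<And>n. L n \<in> borel_measurable M" "\<And>n. U n \<in> borel_measurable M"
    and "\<And>x. L 0 x = 0" "\<And>x. U 0 x = 1"
    and "\<And>n. AE x in M. L n x \<le> U n x \<and> 0 \<le> L n x \<and> L n x \<le> 1 \<and> 0 \<le> U n x \<and> U n x \<le> 1"
    and "\<And>n. prob_space.expectation M (L n) = l n"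
    and "\<And>n. prob_space.expectation M (U n) = u n"
    and "incseq l" "l \<longlonglongrightarrow> s" "decseq u" "u \<longlonglongrightarrow> s"
    and "\<And>n. n \<ge> 1 \<Longrightarrow> AE x in M. real_cond_exp M (Finf M L U n) (L (n - 1)) x
                                      = real_cond_exp M (Fn M L U n) (L (n - 1)) x"
    and "\<And>n. n \<ge> 1 \<Longrightarrow> AE x in M. real_cond_exp M (Fn M L U n) (L (n - 1)) x \<le> L n x"
    and "\<And>n. n \<ge> 1 \<Longrightarrow> AE x in M. real_cond_exp M (Finf M L U n) (U (n - 1)) x
                                      = real_cond_exp M (Fn M L U n) (U (n - 1)) x"
    and "\<And>n. n \<ge> 1 \<Longrightarrow> AE x in M. real_cond_exp M (Fn M L U n) (U (n - 1)) x \<ge> U n x"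
    and "\<And>n. n \<ge> 1 \<Longrightarrow> AE x in M. Ustar M L U n x > Lstar M L U n x"
  shows "(AE x in M. \<forall>n\<ge>1.
            0 \<le> tildeL M L U (n - 1) x \<and>
            tildeL M L U (n - 1) x \<le> tildeL M L U n x \<and>
            tildeL M L U n x \<le> tildeU M L U n x \<and>
            tildeU M L U n x \<le> tildeU M L U (n - 1) x \<and>
            tildeU M L U (n - 1) x \<le> 1 \<and>
            tildeU M L U n x - tildeL M L U n x
              = (tildeU M L U (n - 1) x - tildeL M L U (n - 1) x)
                * ((U n x - L n x) / (Ustar M L U n x - Lstar M L U n x)))
       \<and> (\<forall>n\<ge>1. prob_space.expectation M (tildeL M L U n) = prob_space.expectation M (L n)
                 \<and> prob_space.expectation M (L n) = l n
                 \<and> prob_space.expectation M (tildeU M L U n) = prob_space.expectation M (U n)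
                 \<and> prob_space.expectation M (U n) = u n)"
proof -
  interpret prob_space M by (rule assms(1))
  have Lm[measurable]: "\<And>n. L n \<in> borel_measurable M" and Um[measurable]: "\<And>n. U n \<in> borel_measurable M"
    using assms(4,5) by auto
  have AEgood: "AE x in M. good M L U x"
    unfolding good_def
  proof (subst AE_all_countable, intro allI)
    fix n :: nat
    show "AE x in M. 1 \<le> n \<longrightarrow> Lstar M L U n x \<le> L n x \<and> L n x \<le> U n x \<and> U n x \<le> Ustar M L U n x
      \<and> Lstar M L U n x < Ustar M L U n x"
    proof (cases "1 \<le> n")
      case True
      show ?thesis using assms(8)[of n] assms(16)[OF True] assms(18)[OF True] assms(19)[OF True]
        by eventually_elim (auto simp: Lstar_def Ustar_def)
    qed simp
  qed
  have part1: "AE x in M. \<forall>n\<ge>1.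
            0 \<le> tildeL M L U (n - 1) x \<and>
            tildeL M L U (n - 1) x \<le> tildeL M L U n x \<and>
            tildeL M L U n x \<le> tildeU M L U n x \<and>
            tildeU M L U n x \<le> tildeU M L U (n - 1) x \<and>
            tildeU M L U (n - 1) x \<le> 1 \<and>
            tildeU M L U n x - tildeL M L U n x
              = (tildeU M L U (n - 1) x - tildeL M L U (n - 1) x)
                * ((U n x - L n x) / (Ustar M L U n x - Lstar M L U n x))"
    using AEgood by eventually_elim (intro allI impI, rule pw2)
  have tLm[measurable]: "\<And>n. tildeL M L U n \<in> borel_measurable M"
   and tUm[measurable]: "\<And>n. tildeU M L U n \<in> borel_measurable M"
    using tL_meas[OF Lm Um] by auto
  have intL: "\<And>n. integrable M (tildeL M L U n)"
  proof -
    fix n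
    have "AE x in M. \<bar>tildeL M L U n x\<bar> \<le> 1"
      using AEgood by eventually_elim (use pw[of M L U _ n] in force)
    then show "integrable M (tildeL M L U n)" by (rule bnd_int[OF assms(1) tLm])
  qed
  have intU: "\<And>n. integrable M (tildeU M L U n)"
  proof -
    fix n
    have "AE x in M. \<bar>tildeU M L U n x\<bar> \<le> 1"
      using AEgood by eventually_elim (use pw[of M L U _ n] in force)
    then show "integrable M (tildeU M L U n)" by (rule bnd_int[OF assms(1) tUm])
  qed
  have subF: "\<And>k. subalgebra M (Finf M L U k)" using Finf_sub_M[OF Lm Um] .
  have CE: "(AE x in M. real_cond_exp M (Finf M L U n) (tildeL M L U n) x = L n x)
          \<and> (AE x in M. real_cond_exp M (Finf M L U n) (tildeU M L U n) x = U n x)" for n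
  proof (induction n)
    case 0
    interpret F: sigma_finite_subalgebra M "Finf M L U 0" by (rule sfs[OF assms(1) subF])
    have e1: "tildeL M L U 0 = (\<lambda>x. 0)" "tildeU M L U 0 = (\<lambda>x. 1)" by auto
    show ?case unfolding e1 using F.real_cond_exp_F_meas[of "\<lambda>x. 0::real"]
        F.real_cond_exp_F_meas[of "\<lambda>x. 1::real"] assms(6,7) by auto
  next
    case (Suc m)
    define F where "F = Finf M L U (Suc m)"
    define G where "G = Finf M L U m"
    interpret F: sigma_finite_subalgebra M F unfolding F_def by (rule sfs[OF assms(1) subF])
    have FG: "subalgebra G F" unfolding F_def G_def by (rule Finf_mono) simp
    have nF: "subalgebra F (Fn M L U (Suc m))" unfolding F_def by (rule Fn_sub_Finf) simp
    have [measurable]: "L (Suc m) \<in> borel_measurable F" "U (Suc m) \<in> borel_measurable F"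
      "Lstar M L U (Suc m) \<in> borel_measurable F" "Ustar M L U (Suc m) \<in> borel_measurable F"
      using measurable_from_subalg[OF nF] L_meas_Fn U_meas_Fn borel_measurable_cond_exp
      unfolding Lstar_def Ustar_def by blast+
    define g where "g = (\<lambda>x. (L (Suc m) x - Lstar M L U (Suc m) x) / (Ustar M L U (Suc m) x - Lstar M L U (Suc m) x))"
    define g2 where "g2 = (\<lambda>x. (Ustar M L U (Suc m) x - U (Suc m) x) / (Ustar M L U (Suc m) x - Lstar M L U (Suc m) x))"
    define D where "D = (\<lambda>x. tildeU M L U m x - tildeL M L U m x)"
    have gF[measurable]: "g \<in> borel_measurable F" "g2 \<in> borel_measurable F" unfolding g_def g2_def by measurable
    have gM[measurable]: "g \<in> borel_measurable M" "g2 \<in> borel_measurable M"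
      using measurable_from_subalg[OF F.subalg] gF by blast+
    have DM[measurable]: "D \<in> borel_measurable M" unfolding D_def by measurable
    have intD: "integrable M D" unfolding D_def using intL intU by auto
    have intgD: "integrable M (\<lambda>x. g x * D x)"
    proof (rule bnd_int[OF assms(1)])
      show "AE x in M. \<bar>g x * D x\<bar> \<le> 1"
        using AEgood by eventually_elim (use gD_bound in \<open>simp add: g_def D_def\<close>)
    qed measurable
    have intg2D: "integrable M (\<lambda>x. g2 x * D x)"
    proof (rule bnd_int[OF assms(1)])
      show "AE x in M. \<bar>g2 x * D x\<bar> \<le> 1"
      proof (rule AE_mp[OF AEgood], intro AE_I2 impI)
        fix x assume gx: "good M L U x"
        have g: "Lstar M L U (Suc m) x \<le> L (Suc m) x" "L (Suc m) x \<le> U (Suc m) x" "U (Suc m) x \<le> Ustar M L U (Suc m) x"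
          "Lstar M L U (Suc m) x < Ustar M L U (Suc m) x" using gx unfolding good_def by auto
        note P = pw[OF gx, of m]
        have a: "0 \<le> g2 x" "g2 x \<le> 1" unfolding g2_def using g by (auto simp: divide_le_eq_1)
        have b: "0 \<le> D x" "D x \<le> 1" unfolding D_def using P by auto
        show "\<bar>g2 x * D x\<bar> \<le> 1"
          using a b by (simp add: abs_mult mult_le_one)
      qed
    qed measurable
    have eL: "tildeL M L U (Suc m) = (\<lambda>x. tildeL M L U m x + g x * D x)"
      by (rule ext) (simp add: tLSuc g_def D_def)
    have eU: "tildeU M L U (Suc m) = (\<lambda>x. tildeU M L U m x - g2 x * D x)"
      by (rule ext) (simp add: tUSuc g2_def D_def)
    have neL: "AE x in M. real_cond_exp M F (tildeL M L U m) x = Lstar M L U (Suc m) x"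
    proof -
      have "AE x in M. real_cond_exp M F (real_cond_exp M G (tildeL M L U m)) x = real_cond_exp M F (tildeL M L U m) x"
        using F.real_cond_exp_nested_subalg[OF _ FG intL] subF unfolding G_def by blast
      moreover have "AE x in M. real_cond_exp M F (real_cond_exp M G (tildeL M L U m)) x = real_cond_exp M F (L m) x"
        by (rule F.real_cond_exp_cong) (use Suc in \<open>auto simp: G_def\<close>)
      moreover have "AE x in M. real_cond_exp M F (L m) x = Lstar M L U (Suc m) x"
        using assms(15)[of "Suc m"] unfolding F_def Lstar_def by simp
      ultimately show ?thesis by eventually_elim simp
    qed
    have neU: "AE x in M. real_cond_exp M F (tildeU M L U m) x = Ustar M L U (Suc m) x"
    proof -
      have "AE x in M. real_cond_exp M F (real_cond_exp M G (tildeU M L U m)) x = real_cond_exp M F (tildeU M L U m) x"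
        using F.real_cond_exp_nested_subalg[OF _ FG intU] subF unfolding G_def by blast
      moreover have "AE x in M. real_cond_exp M F (real_cond_exp M G (tildeU M L U m)) x = real_cond_exp M F (U m) x"
        by (rule F.real_cond_exp_cong) (use Suc in \<open>auto simp: G_def\<close>)
      moreover have "AE x in M. real_cond_exp M F (U m) x = Ustar M L U (Suc m) x"
        using assms(17)[of "Suc m"] unfolding F_def Ustar_def by simp
      ultimately show ?thesis by eventually_elim simp
    qed
    have cD: "AE x in M. real_cond_exp M F D x = Ustar M L U (Suc m) x - Lstar M L U (Suc m) x"
      using F.real_cond_exp_diff[OF intU intL, of m m] neL neU unfolding D_def by eventually_elim simp
    have c1: "AE x in M. real_cond_exp M F (tildeL M L U (Suc m)) x
        = real_cond_exp M F (tildeL M L U m) x + g x * real_cond_exp M F D x"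
      using F.real_cond_exp_add[OF intL intgD, of m] F.real_cond_exp_mult[OF gF(1) DM intgD]
      unfolding eL by eventually_elim simp
    have c2: "AE x in M. real_cond_exp M F (tildeU M L U (Suc m)) x
        = real_cond_exp M F (tildeU M L U m) x - g2 x * real_cond_exp M F D x"
      using F.real_cond_exp_diff[OF intU intg2D, of m] F.real_cond_exp_mult[OF gF(2) DM intg2D]
      unfolding eU by eventually_elim simp
    have pos: "AE x in M. Ustar M L U (Suc m) x > Lstar M L U (Suc m) x" using assms(19)[of "Suc m"] by simp
    show ?case unfolding F_def[symmetric]
    proof
      show "AE x in M. real_cond_exp M F (tildeL M L U (Suc m)) x = L (Suc m) x"
        using c1 cD neL pos by eventually_elim (simp add: g_def)
      show "AE x in M. real_cond_exp M F (tildeU M L U (Suc m)) x = U (Suc m) x"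
        using c2 cD neU pos by eventually_elim (simp add: g2_def)
    qed
  qed
  have part2: "\<forall>n\<ge>1. expectation (tildeL M L U n) = expectation (L n)
                 \<and> expectation (L n) = l n
                 \<and> expectation (tildeU M L U n) = expectation (U n)
                 \<and> expectation (U n) = u n"
  proof (intro allI impI conjI)
    fix n :: nat
    interpret F: sigma_finite_subalgebra M "Finf M L U n" by (rule sfs[OF assms(1) subF])
    have "expectation (tildeL M L U n) = expectation (real_cond_exp M (Finf M L U n) (tildeL M L U n))"
      using F.real_cond_exp_int(2)[OF intL] by simp
    also have "\<dots> = expectation (L n)"
      by (rule integral_cong_AE) (use CE in auto)
    finally show "expectation (tildeL M L U n) = expectation (L n)" .
    have "expectation (tildeU M L U n) = expectation (real_cond_exp M (Finf M L U n) (tildeU M L U n))"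
      using F.real_cond_exp_int(2)[OF intU] by simp
    also have "\<dots> = expectation (U n)"
      by (rule integral_cong_AE) (use CE in auto)
    finally show "expectation (tildeU M L U n) = expectation (U n)" .
    show "expectation (L n) = l n" "expectation (U n) = u n" using assms(9,10) by auto
  qed
  show ?thesis using part1 part2 by simp
qed


end
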